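(* Consider the state space model and the extended alive particle filter (APF) described in the context, with $N\ge 1$. For every $t\in\{1,\dots,T\}$, $$\mathbb{E}\left[\frac{\sum_{n=1}^N w_t^{(n)}}{P_t - 1}\,\middle|\, \mathcal{F}_{t-1}\right] = \sum_{n=1}^N \frac{w_{t-1}^{(n)}}{\sum_{m=1}^N w_{t-1}^{(m)}}\, p\!\left(y_t \,\middle|\, x_{t-1}^{(n)}\right),$$ where $p(y_t\mid x_{t-1}) = \int f_t(x_t\mid x_{t-1})\, g_t(y_t\mid x_t)\,dx_t$.
   Context: State space model: $x_0\sim p(x_0)$; for $t=1,\dots,T$, $x_t \sim f_t(x_t\mid x_{t-1})$ and $y_t\sim g_t(y_t\mid x_t)$; the observations $y_1,\dots,y_T$ are fixed. For $s\ge t$, $p(y_{t:s}\mid x_{t-1})$ denotes the conditional density of $y_t,\dots,y_s$ given $x_{t-1}$ under this model (with $p(y_{t+1:t}\mid x_t):=1$). Extended alive particle filter with $N$ particles: initially draw $x_0^{(1)},\dots,x_0^{(N)}$ independently from $p(x_0)$ and set $w_0^{(n)}=1$. For each $t=1,\dots,T$: set $P_t\gets 0$; for each $n=1,\dots,N+1$, repeat the following until the weight is positive: draw an index $a$ from the categorical distribution with probabilities $w_{t-1}^{(m)}/\sum_{l=1}^N w_{t-1}^{(l)}$, $m=1,\dots,N$; draw $x_t^{(n)}\sim f_t(\cdot\mid x_{t-1}^{(a)})$; increment $P_t$ by one; set $w_t^{(n)} = g_t(y_t\mid x_t^{(n)})$. Thus $P_t$ is the total number of propagations (including those for the $(N+1)$-th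 particle) at time $t$; the $(N+1)$-th particle's state and weight are otherwise never used. $\mathcal{F}_t=\{x_t^{(n)},w_t^{(n)}\}_{n=1}^N$ denotes the states and weights of the first $N$ particles at time $t$. *)

theory Defs
  imports "HOL-Probability.Probability"
begin

text \<open>One time step t of the extended alive particle filter, given
  F_{t-1} = (xs, w) (states and weights of the N particles at time t-1, indices 0..N-1).
  The transition density f_t(x'|x) is  f x x'  w.r.t. a reference measure mu on the state space,
  the observation density with y_t fixed is  g x' = g_t(y_t | x').
  Each propagation draws an ancestor index a with probability w a / sum w, then
  x' ~ f(. | xs a); the draw is recorded as the pair (a, x').\<close>

definition apf_draw ::
  "'a measure \<Rightarrow> nat \<Rightarrow> (nat \<Rightarrow> 'a) \<Rightarrow> (nat \<Rightarrow> real) \<Rightarrow> ('a \<Rightarrow> 'a \<Rightarrow> real) \<Rightarrow> (nat \<times> 'a) measure"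
  where
  "apf_draw \<mu> N xs w f =
     density (count_space UNIV \<Otimes>\<^sub>M \<mu>)
       (\<lambda>(a, x'). ennreal (if a < N then w a / (\<Sum>m<N. w m) * f (xs a) x' else 0))"

text \<open>All propagations at time t form an i.i.d. sequence of draws (the repeat-until loops
  simply consume fresh draws). omega i is the i-th propagation (0-based).\<close>

definition apf_space ::
  "'a measure \<Rightarrow> nat \<Rightarrow> (nat \<Rightarrow> 'a) \<Rightarrow> (nat \<Rightarrow> real) \<Rightarrow> ('a \<Rightarrow> 'a \<Rightarrow> real) \<Rightarrow> (nat \<Rightarrow> nat \<times> 'a) measure"
  where
  "apf_space \<mu> N xs w f = PiM UNIV (\<lambda>_::nat. apf_draw \<mu> N xs w f)"

text \<open>Index of the propagation that produced particle n+1 (the (n+1)-th positive-weight draw).\<close>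
definition apf_pos :: "('a \<Rightarrow> real) \<Rightarrow> (nat \<Rightarrow> nat \<times> 'a) \<Rightarrow> nat \<Rightarrow> nat" where
  "apf_pos g \<omega> n = enumerate {i. 0 < g (snd (\<omega> i))} n"

text \<open>P_t: total number of propagations, including those for the (N+1)-th particle.\<close>
definition apf_P :: "('a \<Rightarrow> real) \<Rightarrow> nat \<Rightarrow> (nat \<Rightarrow> nat \<times> 'a) \<Rightarrow> nat" where
  "apf_P g N \<omega> = Suc (apf_pos g \<omega> N)"

definition apf_weight :: "('a \<Rightarrow> real) \<Rightarrow> (nat \<Rightarrow> nat \<times> 'a) \<Rightarrow> nat \<Rightarrow> real" where
  "apf_weight g \<omega> n = g (snd (\<omega> (apf_pos g \<omega> n)))"

end

theory Submission
  imports Defs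
begin

lemma enum_rank:
  fixes S :: "nat set"
  shows "j \<in> S \<Longrightarrow> card {i. i<j \<and> i\<in>S} = n \<Longrightarrow> enumerate S n = j"
proof (induction n arbitrary: S j)
  case 0
  have "{i. i<j \<and> i\<in>S} = {}" using 0 by (simp add: card_eq_0_iff)
  hence "\<forall>y\<in>S. j \<le> y" by (auto simp: not_less[symmetric])
  thus ?case using 0 by (auto simp: enumerate_0 intro!: Least_equality)
next
  case (Suc n)
  define m where "m = (LEAST x. x \<in> S)"
  have mS: "m \<in> S" using Suc.prems(1) m_def by (metis LeastI)
  have "{i. i<j \<and> i\<in>S} \<noteq> {}"
  proof
    assume "{i. i<j \<and> i\<in>S} = {}"
    hence "card {i. i<j \<and> i\<in>S} = 0" by simp
    with Suc.prems(2) show False by simp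
  qed
  then obtain i where "i < j" "i \<in> S" by auto
  hence mj: "m < j" using m_def by (meson Least_le le_less_trans)
  have eq: "{i. i<j \<and> i\<in>S - {m}} = {i. i<j \<and> i\<in>S} - {m}" by auto
  have "card {i. i<j \<and> i\<in>S - {m}} = n"
    unfolding eq using Suc.prems(2) mS mj by (subst card_Diff_singleton) auto
  moreover have "j \<in> S - {m}" using Suc.prems(1) mj by auto
  ultimately show ?case using Suc.IH by (simp add: enumerate_Suc m_def[symmetric])
qed

lemma enum_none:
  fixes S :: "nat set"
  shows "(\<forall>j. j \<in> S \<longrightarrow> card {i. i<j \<and> i\<in>S} \<noteq> n) \<Longrightarrow> enumerate S n = enumerate {} 0"
proof (induction n arbitrary: S)
  case 0
  show ?case
  proof (cases "S = {}")
    case False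
    define m where "m = (LEAST x. x \<in> S)"
    have mS: "m \<in> S" using False m_def by (metis LeastI ex_in_conv)
    have "{i. i<m \<and> i\<in>S} = {}" using m_def not_less_Least by auto
    thus ?thesis using 0 mS by force
  qed simp
next
  case (Suc n)
  show ?case
  proof (cases "S = {}")
    case True
    thus ?thesis using Suc.IH[of "{}"] by (simp add: enumerate_Suc)
  next
    case False
    define m where "m = (LEAST x. x \<in> S)"
    have mS: "m \<in> S" using False m_def by (metis LeastI ex_in_conv)
    have "\<forall>j. j \<in> S - {m} \<longrightarrow> card {i. i<j \<and> i\<in>S - {m}} \<noteq> n"
    proof (intro allI impI)
      fix j assume j: "j \<in> S - {m}"
      hence mj: "m < j" using m_def by (metis DiffE Least_le le_neq_implies_less singletonI)
      have eq: "{i. i<j \<and> i\<in>S - {m}} = {i. i<j \<and> i\<in>S} - {m}" by auto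
      have "card {i. i<j \<and> i\<in>S - {m}} = card {i. i<j \<and> i\<in>S} - 1"
        unfolding eq using mS mj by (subst card_Diff_singleton) auto
      moreover have "card {i. i<j \<and> i\<in>S} \<ge> 1" using mS mj
        by (metis (no_types, lifting) One_nat_def Suc_leI card_gt_0_iff empty_iff finite_nat_set_iff_bounded mem_Collect_eq)
      ultimately show "card {i. i<j \<and> i\<in>S - {m}} \<noteq> n" using Suc.prems j by auto
    qed
    thus ?thesis using Suc.IH by (simp add: enumerate_Suc m_def[symmetric])
  qed
qed

lemma enum_iff:
  fixes S :: "nat set"
  shows "enumerate S n = k \<longleftrightarrow> (k \<in> S \<and> card {i. i<k \<and> i\<in>S} = n) \<or>
     ((\<forall>j. j \<in> S \<longrightarrow> card {i. i<j \<and> i\<in>S} \<noteq> n) \<and> k = enumerate {} 0)"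
proof (cases "\<exists>j. j \<in> S \<and> card {i. i<j \<and> i\<in>S} = n")
  case True
  then obtain j where j: "j \<in> S" "card {i. i<j \<and> i\<in>S} = n" by auto
  have "enumerate S n = j" using enum_rank[OF j] .
  moreover have "k \<in> S \<and> card {i. i<k \<and> i\<in>S} = n \<Longrightarrow> k = j"
    using enum_rank[of k S n] \<open>enumerate S n = j\<close> by auto
  ultimately show ?thesis using j by auto
next
  case False
  thus ?thesis using enum_none[of S n] by auto
qed

lemma enum_sum:
  fixes S :: "nat set" and G :: "nat \<Rightarrow> real"
  assumes "infinite S" "\<And>i. i \<notin> S \<Longrightarrow> G i = 0"
  shows "(\<Sum>n<N. G (enumerate S n)) = (\<Sum>i<enumerate S N. G i)"
proof -
  have img: "enumerate S ` {..<N} = S \<inter> {..<enumerate S N}"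
  proof
    show "enumerate S ` {..<N} \<subseteq> S \<inter> {..<enumerate S N}"
      using assms(1) by (auto intro: enumerate_in_set)
    show "S \<inter> {..<enumerate S N} \<subseteq> enumerate S ` {..<N}"
    proof
      fix s assume s: "s \<in> S \<inter> {..<enumerate S N}"
      then obtain n where n: "enumerate S n = s" using enumerate_Ex[OF assms(1)] by blast
      hence "n < N" using s assms(1) by auto
      thus "s \<in> enumerate S ` {..<N}" using n by auto
    qed
  qed
  have inj: "inj_on (enumerate S) {..<N}" using inj_enumerate[OF assms(1)] by (simp add: inj_on_def)
  have "(\<Sum>i<enumerate S N. G i) = (\<Sum>i\<in>S \<inter> {..<enumerate S N}. G i)"
    using assms(2) by (intro sum.mono_neutral_right) auto
  also have "\<dots> = (\<Sum>n<N. G (enumerate S n))"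
    unfolding img[symmetric] by (simp add: sum.reindex[OF inj])
  finally show ?thesis by simp
qed


lemma pred_card_less:
  fixes k n :: nat and P :: "nat \<Rightarrow> 'a \<Rightarrow> bool"
  assumes "\<And>j. Measurable.pred M (P j)"
  shows "Measurable.pred M (\<lambda>\<omega>. card {i. i<k \<and> P i \<omega>} = n)"
proof -
  have eq: "(\<lambda>\<omega>. card {i. i<k \<and> P i \<omega>} = n) =
     (\<lambda>\<omega>. \<exists>A\<in>Pow {..<k}. card A = n \<and> (\<forall>i\<in>{..<k}. (P i \<omega> \<longleftrightarrow> i \<in> A)))"
  proof (intro ext iffI)
    fix \<omega> assume "card {i. i<k \<and> P i \<omega>} = n"
    thus "\<exists>A\<in>Pow {..<k}. card A = n \<and> (\<forall>i\<in>{..<k}. (P i \<omega> \<longleftrightarrow> i \<in> A))"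
      by (intro bexI[of _ "{i. i<k \<and> P i \<omega>}"]) auto
  next
    fix \<omega> assume "\<exists>A\<in>Pow {..<k}. card A = n \<and> (\<forall>i\<in>{..<k}. (P i \<omega> \<longleftrightarrow> i \<in> A))"
    then obtain A where A: "A \<subseteq> {..<k}" "card A = n" "\<forall>i\<in>{..<k}. (P i \<omega> \<longleftrightarrow> i \<in> A)" by auto
    hence "{i. i<k \<and> P i \<omega>} = A" by auto
    thus "card {i. i<k \<and> P i \<omega>} = n" using A by simp
  qed
  have eq2: "(\<lambda>\<omega>. \<exists>A\<in>Pow {..<k}. card A = n \<and> (\<forall>i\<in>{..<k}. (P i \<omega> \<longleftrightarrow> i \<in> A))) =
     (\<lambda>\<omega>. \<exists>A\<in>{A\<in>Pow {..<k}. card A = n}. (\<forall>i\<in>{..<k}. (P i \<omega> \<and> i \<in> A) \<or> (\<not> P i \<omega> \<and> i \<notin> A)))"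
    by auto
  have pc: "\<And>c. Measurable.pred M (\<lambda>x. c)" by simp
  show ?thesis unfolding eq eq2
    by (intro pred_intros_finite pred_intros_logic assms pc) (auto intro: finite_subset[of _ "Pow {..<k}"])
qed

lemma enum_rank_inf:
  fixes S :: "nat set"
  assumes "infinite S"
  shows "card {i. i < enumerate S n \<and> i \<in> S} = n"
proof -
  have img: "enumerate S ` {..<n} = {i. i < enumerate S n \<and> i \<in> S}"
  proof
    show "enumerate S ` {..<n} \<subseteq> {i. i < enumerate S n \<and> i \<in> S}"
      using assms by (auto intro: enumerate_in_set)
    show "{i. i < enumerate S n \<and> i \<in> S} \<subseteq> enumerate S ` {..<n}"
    proof
      fix s assume s: "s \<in> {i. i < enumerate S n \<and> i \<in> S}"
      then obtain m where m: "enumerate S m = s" using enumerate_Ex[OF assms] by blast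
      hence "m < n" using s assms by auto
      thus "s \<in> enumerate S ` {..<n}" using m by auto
    qed
  qed
  have inj: "inj_on (enumerate S) {..<n}" using inj_enumerate[OF assms] by (simp add: inj_on_def)
  show ?thesis unfolding img[symmetric] using card_image[OF inj] by simp
qed


theorem lemma1:
  fixes \<mu> :: "'a measure" and N :: nat and xs :: "nat \<Rightarrow> 'a" and w :: "nat \<Rightarrow> real"
    and f :: "'a \<Rightarrow> 'a \<Rightarrow> real" and g :: "'a \<Rightarrow> real"
  assumes "sigma_finite_measure \<mu>"
    and "N \<ge> 1"
    and "\<And>n. n < N \<Longrightarrow> xs n \<in> space \<mu>"
    and "\<And>n. n < N \<Longrightarrow> w n \<ge> 0"
    and "(\<Sum>m<N. w m) > 0"
    and "\<And>x. x \<in> space \<mu> \<Longrightarrow> f x \<in> borel_measurable \<mu>"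
    and "\<And>x x'. x \<in> space \<mu> \<Longrightarrow> x' \<in> space \<mu> \<Longrightarrow> f x x' \<ge> 0"
    and "\<And>x. x \<in> space \<mu> \<Longrightarrow> (\<integral>\<^sup>+ x'. ennreal (f x x') \<partial>\<mu>) = 1"
    and "g \<in> borel_measurable \<mu>"
    and "\<And>x'. x' \<in> space \<mu> \<Longrightarrow> g x' \<ge> 0"
    and "\<And>n. n < N \<Longrightarrow> integrable \<mu> (\<lambda>x'. f (xs n) x' * g x')"
    and "(\<Sum>n<N. w n / (\<Sum>m<N. w m) * (\<integral>x'. f (xs n) x' * g x' \<partial>\<mu>)) > 0"
  shows "(\<integral>\<omega>. (\<Sum>n<N. apf_weight g \<omega> n) / (real (apf_P g N \<omega>) - 1) \<partial>(apf_space \<mu> N xs w f))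
         = (\<Sum>n<N. w n / (\<Sum>m<N. w m) * (\<integral>x'. f (xs n) x' * g x' \<partial>\<mu>))"
proof -
  interpret mu: sigma_finite_measure \<mu> by fact
  define W where "W = (\<Sum>m<N. w m)"
  define RHS where "RHS = (\<Sum>n<N. w n / W * (\<integral>x'. f (xs n) x' * g x' \<partial>\<mu>))"
  have W_pos: "W > 0" using assms(5) W_def by simp
  have RHS_pos: "RHS > 0" using assms(12) by (simp add: RHS_def W_def)
  define D where "D = apf_draw \<mu> N xs w f"
  define M where "M = apf_space \<mu> N xs w f"
  have M_eq: "M = PiM UNIV (\<lambda>_. D)" by (simp add: M_def D_def apf_space_def)
  have space_D: "space D = UNIV \<times> space \<mu>" by (simp add: D_def apf_draw_def space_pair_measure)
  have sets_D: "sets D = sets (count_space UNIV \<Otimes>\<^sub>M \<mu>)" by (simp add: D_def apf_draw_def)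
  define dens where "dens = (\<lambda>(a, x'). ennreal (if a < N then w a / W * f (xs a) x' else 0))"
  have D_dens: "D = density (count_space UNIV \<Otimes>\<^sub>M \<mu>) dens"
    unfolding D_def apf_draw_def dens_def W_def ..
  have dens_meas: "dens \<in> borel_measurable (count_space UNIV \<Otimes>\<^sub>M \<mu>)"
    unfolding dens_def
  proof (rule measurable_pair_measure_countable1)
    fix a :: nat
    show "(\<lambda>y. case (a, y) of (a, x') \<Rightarrow> ennreal (if a < N then w a / W * f (xs a) x' else 0)) \<in> borel_measurable \<mu>"
    proof (cases "a < N")
      case True
      have [measurable]: "f (xs a) \<in> borel_measurable \<mu>" using assms(3,6) True by blast
      show ?thesis using True by simp
    qed simp
  qed simp
  have D_int: "integral\<^sup>N D h = (\<Sum>a<N. ennreal (w a / W) * (\<integral>\<^sup>+ x'. ennreal (f (xs a) x') * h (a, x') \<partial>\<mu>))"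
    if h: "h \<in> borel_measurable (count_space UNIV \<Otimes>\<^sub>M \<mu>)" for h
  proof -
    have "integral\<^sup>N D h = (\<integral>\<^sup>+ z. dens z * h z \<partial>(count_space UNIV \<Otimes>\<^sub>M \<mu>))"
      unfolding D_dens by (rule nn_integral_density[OF dens_meas h])
    also have "\<dots> = (\<integral>\<^sup>+ a. \<integral>\<^sup>+ x'. dens (a, x') * h (a, x') \<partial>\<mu> \<partial>count_space UNIV)"
      by (rule mu.nn_integral_fst[symmetric]) (use dens_meas h in measurable)
    also have "\<dots> = (\<Sum>a. \<integral>\<^sup>+ x'. dens (a, x') * h (a, x') \<partial>\<mu>)"
      by (rule nn_integral_count_space_nat)
    also have "\<dots> = (\<Sum>a<N. \<integral>\<^sup>+ x'. dens (a, x') * h (a, x') \<partial>\<mu>)"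
      by (rule suminf_finite) (auto simp: dens_def)
    also have "\<dots> = (\<Sum>a<N. ennreal (w a / W) * (\<integral>\<^sup>+ x'. ennreal (f (xs a) x') * h (a, x') \<partial>\<mu>))"
    proof (rule sum.cong[OF refl])
      fix a assume a: "a \<in> {..<N}"
      have [measurable]: "f (xs a) \<in> borel_measurable \<mu>" using assms(3,6) a by blast
      have wa: "0 \<le> w a / W" using assms(4) a W_pos by simp
      have "(\<integral>\<^sup>+ x'. dens (a, x') * h (a, x') \<partial>\<mu>) = (\<integral>\<^sup>+ x'. ennreal (w a / W) * (ennreal (f (xs a) x') * h (a, x')) \<partial>\<mu>)"
        using a wa by (intro nn_integral_cong) (simp add: dens_def ennreal_mult'[OF wa] mult.assoc del: times_divide_eq_left)
      also have "\<dots> = ennreal (w a / W) * (\<integral>\<^sup>+ x'. ennreal (f (xs a) x') * h (a, x') \<partial>\<mu>)"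
        by (rule nn_integral_cmult) (use h in measurable)
      finally show "(\<integral>\<^sup>+ x'. dens (a, x') * h (a, x') \<partial>\<mu>) = ennreal (w a / W) * (\<integral>\<^sup>+ x'. ennreal (f (xs a) x') * h (a, x') \<partial>\<mu>)" .
    qed
    finally show ?thesis .
  qed
  have "emeasure D (space D) = integral\<^sup>N D (\<lambda>_. 1)" by simp
  also have "\<dots> = (\<Sum>a<N. ennreal (w a / W) * 1)"
    using assms(3,8) by (subst D_int) auto
  also have "\<dots> = ennreal (\<Sum>a<N. w a / W)"
    using assms(4) W_pos by (subst sum_ennreal[symmetric]) auto
  also have "(\<Sum>a<N. w a / W) = 1" using W_pos by (simp add: W_def sum_divide_distrib[symmetric])
  finally interpret D: prob_space D by (intro prob_spaceI) simp
  interpret P: product_prob_space "\<lambda>_::nat. D" UNIV by unfold_locales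
  have snd_meas: "snd \<in> measurable D \<mu>"
    using measurable_snd by (subst measurable_cong_sets[OF sets_D refl]) 
  have G_meas[measurable]: "(\<lambda>\<omega>. g (snd (\<omega> j))) \<in> borel_measurable M" for j
  proof -
    have "(\<lambda>\<omega>. \<omega> j) \<in> measurable M D" unfolding M_eq by (rule measurable_component_singleton) simp
    from measurable_compose[OF measurable_compose[OF this snd_meas] assms(9)] show ?thesis by simp
  qed
  have space_M: "\<omega> j \<in> space D" if "\<omega> \<in> space M" for \<omega> j
    using that unfolding M_eq by (auto simp: space_PiM)
  have Gnn: "0 \<le> g (snd (\<omega> j))" if "\<omega> \<in> space M" for \<omega> j
    using space_M[OF that, of j] assms(10) by (auto simp: space_D)
  have succ_pred: "Measurable.pred M (\<lambda>\<omega>. 0 < g (snd (\<omega> j)))" for j by measurable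
  have cnt_pred: "Measurable.pred M (\<lambda>\<omega>. card {i. i<k \<and> 0 < g (snd (\<omega> i))} = n)" for k n
    by (rule pred_card_less[OF succ_pred])
  have pos_pred: "Measurable.pred M (\<lambda>\<omega>. apf_pos g \<omega> n = k)" for n k
  proof -
    have eq: "(\<lambda>\<omega>. apf_pos g \<omega> n = k) = (\<lambda>\<omega>. (0 < g (snd (\<omega> k)) \<and> card {i. i<k \<and> 0 < g (snd (\<omega> i))} = n) \<or>
     ((\<forall>j. 0 < g (snd (\<omega> j)) \<longrightarrow> card {i. i<j \<and> 0 < g (snd (\<omega> i))} \<noteq> n) \<and> k = enumerate {} 0))"
      unfolding apf_pos_def by (subst enum_iff) simp
    have pc: "\<And>c. Measurable.pred M (\<lambda>x. c)" by simp
    show ?thesis unfolding eq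
      by (intro pred_intros_logic pred_intros_countable succ_pred cnt_pred pc)
  qed
  have pos_meas[measurable]: "(\<lambda>\<omega>. apf_pos g \<omega> n) \<in> measurable M (count_space UNIV)" for n
  proof (subst measurable_count_space_eq2_countable, safe)
    fix k
    have "{x \<in> space M. apf_pos g x n = k} \<in> sets M" using pos_pred[of n k] by (simp add: pred_def)
    thus "(\<lambda>\<omega>. apf_pos g \<omega> n) -` {k} \<inter> space M \<in> sets M" by (simp add: Int_def conj_commute vimage_def)
  qed simp
  have Gpos_meas[measurable]: "(\<lambda>\<omega>. g (snd (\<omega> (apf_pos g \<omega> n)))) \<in> borel_measurable M" for n
    by (rule measurable_compose_countable[where f="\<lambda>i \<omega>. g (snd (\<omega> i))", OF G_meas pos_meas])
  define r where "r = (\<lambda>\<omega>. (\<Sum>n<N. apf_weight g \<omega> n) / (real (apf_P g N \<omega>) - 1))"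
  have r_meas: "r \<in> borel_measurable M"
    unfolding r_def apf_weight_def apf_P_def by measurable
  have r_nn: "0 \<le> r \<omega>" if "\<omega> \<in> space M" for \<omega>
    unfolding r_def apf_weight_def apf_P_def using Gnn[OF that] by (auto intro!: divide_nonneg_nonneg sum_nonneg)
  have gD_meas: "(\<lambda>z. ennreal (g (snd z))) \<in> borel_measurable (count_space UNIV \<Otimes>\<^sub>M \<mu>)"
    using assms(9) by measurable
  have ED: "integral\<^sup>N D (\<lambda>z. ennreal (g (snd z))) = ennreal RHS"
  proof -
    have "integral\<^sup>N D (\<lambda>z. ennreal (g (snd z))) = (\<Sum>a<N. ennreal (w a / W) * (\<integral>\<^sup>+ x'. ennreal (f (xs a) x') * ennreal (g x') \<partial>\<mu>))"
      using D_int[OF gD_meas] by simp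
    also have "\<dots> = (\<Sum>a<N. ennreal (w a / W * (\<integral>x'. f (xs a) x' * g x' \<partial>\<mu>)))"
    proof (rule sum.cong[OF refl])
      fix a assume a: "a \<in> {..<N}"
      have wa: "0 \<le> w a / W" using assms(4) a W_pos by simp
      have [measurable]: "f (xs a) \<in> borel_measurable \<mu>" using assms(3,6) a by blast
      have "(\<integral>\<^sup>+ x'. ennreal (f (xs a) x') * ennreal (g x') \<partial>\<mu>) = (\<integral>\<^sup>+ x'. ennreal (f (xs a) x' * g x') \<partial>\<mu>)"
        using a assms(3,7,10) by (intro nn_integral_cong) (simp add: ennreal_mult)
      also have "\<dots> = ennreal (\<integral>x'. f (xs a) x' * g x' \<partial>\<mu>)"
        using a assms(3,7,10,11) by (intro nn_integral_eq_integral) auto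
      finally show "ennreal (w a / W) * (\<integral>\<^sup>+ x'. ennreal (f (xs a) x') * ennreal (g x') \<partial>\<mu>) = ennreal (w a / W * (\<integral>x'. f (xs a) x' * g x' \<partial>\<mu>))"
        using wa by (simp add: ennreal_mult'[OF wa] del: times_divide_eq_left)
    qed
    also have "\<dots> = ennreal RHS"
      unfolding RHS_def
    proof (rule sum_ennreal)
      fix a assume a: "a \<in> {..<N}"
      have wa: "0 \<le> w a / W" using assms(4) a W_pos by simp
      have "0 \<le> (\<integral>x'. f (xs a) x' * g x' \<partial>\<mu>)"
        using a assms(3,7,10) by (intro integral_nonneg_AE AE_I2) simp
      thus "0 \<le> w a / W * (\<integral>x'. f (xs a) x' * g x' \<partial>\<mu>)" using wa by (metis mult_nonneg_nonneg)
    qed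
    finally show ?thesis .
  qed
  define Pos where "Pos = {z \<in> space D. 0 < g (snd z)}"
  have Pos_sets: "Pos \<in> sets D" unfolding Pos_def using snd_meas assms(9) by measurable
  have Pos_ne: "emeasure D Pos \<noteq> 0"
  proof
    assume "emeasure D Pos = 0"
    hence "AE z in D. \<not> 0 < g (snd z)" by (intro AE_I[OF _ _ Pos_sets]) (auto simp: Pos_def)
    hence "integral\<^sup>N D (\<lambda>z. ennreal (g (snd z))) = integral\<^sup>N D (\<lambda>z. 0)"
      by (intro nn_integral_cong_AE) (auto simp: ennreal_eq_0_iff)
    thus False using ED RHS_pos by simp
  qed
  define q where "q = measure D (space D - Pos)"
  have q_lt: "q < 1" and q_nn: "0 \<le> q"
  proof -
    have "measure D Pos \<noteq> 0" using Pos_ne by (simp add: D.emeasure_eq_measure)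
    hence "measure D Pos > 0" using measure_nonneg[of D Pos] by linarith
    thus "q < 1" unfolding q_def using D.prob_compl[OF Pos_sets] by simp
    show "0 \<le> q" unfolding q_def by simp
  qed
  have fin_null: "emeasure M {\<omega>\<in>space M. \<forall>j\<ge>m. \<not> 0 < g (snd (\<omega> j))} = 0" (is "emeasure M ?B = 0") for m
  proof -
    have Bs: "?B \<in> sets M" by measurable
    have le: "measure M ?B \<le> q ^ L" for L
    proof -
      have comp: "(\<lambda>\<omega>. \<omega> j) \<in> measurable M D" for j unfolding M_eq by (rule measurable_component_singleton) simp
      have "Measurable.pred M (\<lambda>\<omega>. \<forall>j\<in>{m..<m+L}. \<omega> j \<in> space D - Pos)"
        using Pos_sets by (intro pred_intros_finite pred_sets2[OF _ comp]) auto
      hence Cs: "{\<omega>\<in>space M. \<forall>j\<in>{m..<m+L}. \<omega> j \<in> space D - Pos} \<in> sets M" by (simp add: pred_def)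
      have "emeasure M ?B \<le> emeasure M {\<omega>\<in>space M. \<forall>j\<in>{m..<m+L}. \<omega> j \<in> space D - Pos}"
        using space_M Cs by (intro emeasure_mono) (auto simp: Pos_def)
      also have "\<dots> = (\<Prod>j\<in>{m..<m+L}. emeasure D (space D - Pos))"
        unfolding M_eq using Pos_sets by (intro P.emeasure_PiM_Collect) auto
      also have "\<dots> = ennreal (q ^ L)"
        using q_nn by (simp add: D.emeasure_eq_measure q_def ennreal_power)
      finally show ?thesis using q_nn
        unfolding M_eq by (simp add: P.emeasure_eq_measure)
    qed
    have "measure M ?B \<le> 0"
    proof (rule ccontr)
      assume "\<not> measure M ?B \<le> 0"
      then obtain L where "q ^ L < measure M ?B" using real_arch_pow_inv[of "measure M ?B" q] q_lt by auto
      with le[of L] show False by simp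
    qed
    hence "measure M ?B = 0" by (simp add: antisym)
    thus ?thesis using P.emeasure_eq_measure[of ?B] unfolding M_eq[symmetric] by simp
  qed
  have AE_inf: "AE \<omega> in M. infinite {j. 0 < g (snd (\<omega> j))}"
  proof -
    have "AE \<omega> in M. \<exists>j\<ge>m. 0 < g (snd (\<omega> j))" for m
      by (rule AE_I[OF _ fin_null[of m]]) (auto, measurable)
    hence "AE \<omega> in M. \<forall>m. \<exists>j\<ge>m. 0 < g (snd (\<omega> j))" by (simp add: AE_all_countable)
    thus ?thesis by eventually_elim (simp add: infinite_nat_iff_unbounded_le)
  qed
  define E where "E k = {\<omega>\<in>space M. 0 < g (snd (\<omega> k)) \<and> card {i. i<k \<and> 0 < g (snd (\<omega> i))} = N}" for k
  have E_sets: "E k \<in> sets M" for k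
  proof -
    have "Measurable.pred M (\<lambda>\<omega>. 0 < g (snd (\<omega> k)) \<and> card {i. i<k \<and> 0 < g (snd (\<omega> i))} = N)"
      by (intro pred_intros_logic succ_pred cnt_pred)
    thus ?thesis by (simp add: pred_def E_def)
  qed
  have E0: "E 0 = {}" using assms(2) by (auto simp: E_def)
  have pos_E: "apf_pos g \<omega> N = k \<longleftrightarrow> \<omega> \<in> E k"
    if w: "\<omega> \<in> space M" and inf: "infinite {j. 0 < g (snd (\<omega> j))}" for \<omega> k
  proof
    assume "apf_pos g \<omega> N = k"
    hence ek: "enumerate {j. 0 < g (snd (\<omega> j))} N = k" by (simp add: apf_pos_def)
    have "k \<in> {j. 0 < g (snd (\<omega> j))}" using enumerate_in_set[OF inf] ek by metis
    moreover have "card {i. i < k \<and> i \<in> {j. 0 < g (snd (\<omega> j))}} = N" using enum_rank_inf[OF inf, of N] ek by simp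
    ultimately show "\<omega> \<in> E k" using w by (simp add: E_def)
  next
    assume "\<omega> \<in> E k"
    hence "k \<in> {j. 0 < g (snd (\<omega> j))}" "card {i. i < k \<and> i \<in> {j. 0 < g (snd (\<omega> j))}} = N"
      by (auto simp: E_def)
    from enum_rank[OF this] show "apf_pos g \<omega> N = k" by (simp add: apf_pos_def)
  qed
  have r_eq: "r \<omega> = (\<Sum>i<apf_pos g \<omega> N. g (snd (\<omega> i))) / real (apf_pos g \<omega> N)"
    if w: "\<omega> \<in> space M" and inf: "infinite {j. 0 < g (snd (\<omega> j))}" for \<omega>
  proof -
    have "(\<Sum>n<N. g (snd (\<omega> (enumerate {j. 0 < g (snd (\<omega> j))} n)))) =
          (\<Sum>i<enumerate {j. 0 < g (snd (\<omega> j))} N. g (snd (\<omega> i)))"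
      using Gnn[OF w] by (intro enum_sum[OF inf]) (auto simp: not_less intro: antisym)
    thus ?thesis unfolding r_def apf_weight_def apf_P_def apf_pos_def by simp
  qed
  have AE1: "AE \<omega> in M. ennreal (r \<omega>) = (\<Sum>k. ennreal (1 / real k) * (\<Sum>i<k. indicator (E k) \<omega> * ennreal (g (snd (\<omega> i)))))"
    using AE_inf
  proof (rule AE_mp[OF _ AE_I2[rule_format]])
    fix \<omega> assume w: "\<omega> \<in> space M"
    show "infinite {j. 0 < g (snd (\<omega> j))} \<longrightarrow> ennreal (r \<omega>) = (\<Sum>k. ennreal (1 / real k) * (\<Sum>i<k. indicator (E k) \<omega> * ennreal (g (snd (\<omega> i)))))"
    proof
      assume inf: "infinite {j. 0 < g (snd (\<omega> j))}"
      define K where "K = apf_pos g \<omega> N"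
      have "(\<Sum>k. ennreal (1 / real k) * (\<Sum>i<k. indicator (E k) \<omega> * ennreal (g (snd (\<omega> i))))) =
            (\<Sum>k\<in>{K}. ennreal (1 / real k) * (\<Sum>i<k. indicator (E k) \<omega> * ennreal (g (snd (\<omega> i)))))"
      proof (rule suminf_finite)
        fix k assume "k \<notin> {K}"
        hence "\<omega> \<notin> E k" using pos_E[OF w inf, of k] by (simp add: K_def)
        thus "ennreal (1 / real k) * (\<Sum>i<k. indicator (E k) \<omega> * ennreal (g (snd (\<omega> i)))) = 0" by simp
      qed simp
      also have "\<dots> = ennreal (1 / real K) * (\<Sum>i<K. ennreal (g (snd (\<omega> i))))"
        using pos_E[OF w inf, of K] by (simp add: K_def)
      also have "\<dots> = ennreal (1 / real K * (\<Sum>i<K. g (snd (\<omega> i))))"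
        using Gnn[OF w] by (simp add: ennreal_mult'[symmetric] sum_nonneg del: times_divide_eq_left divide_inverse_commute)
      also have "\<dots> = ennreal (r \<omega>)" using r_eq[OF w inf] by (simp add: K_def)
      finally show "ennreal (r \<omega>) = (\<Sum>k. ennreal (1 / real k) * (\<Sum>i<k. indicator (E k) \<omega> * ennreal (g (snd (\<omega> i)))))" by simp
    qed
  qed
  have HM: "(\<lambda>\<omega>. indicator (E k) \<omega> * ennreal (g (snd (\<omega> i)))) \<in> borel_measurable M" for k i
    using E_sets[of k] by measurable
  have swap: "(\<integral>\<^sup>+\<omega>. indicator (E k) \<omega> * ennreal (g (snd (\<omega> i))) \<partial>M) =
              (\<integral>\<^sup>+\<omega>. indicator (E k) \<omega> * ennreal (g (snd (\<omega> 0))) \<partial>M)" if ik: "i < k" for i k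
  proof -
    define \<sigma> where "\<sigma> j = (if j = 0 then i else if j = i then 0 else j)" for j :: nat
    have inj: "inj \<sigma>" unfolding \<sigma>_def inj_def by auto
    define T where "T \<omega> = (\<lambda>n\<in>UNIV. \<omega> (\<sigma> n))" for \<omega> :: "nat \<Rightarrow> nat \<times> 'a"
    have distrT: "distr M M T = M"
      unfolding M_eq T_def using distr_PiM_reindex[of UNIV "\<lambda>_. D" \<sigma> UNIV] inj D.prob_space_axioms by simp
    have T_meas: "T \<in> measurable M M"
      unfolding M_eq T_def by (intro measurable_restrict measurable_component_singleton) simp
    have key: "indicator (E k) (T \<omega>) * ennreal (g (snd (T \<omega> 0))) = indicator (E k) \<omega> * ennreal (g (snd (\<omega> i)))"
      if w: "\<omega> \<in> space M" for \<omega>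
    proof -
      have Tw: "T \<omega> \<in> space M" using measurable_space[OF T_meas w] .
      have T0: "T \<omega> 0 = \<omega> i" by (simp add: T_def \<sigma>_def)
      have Tk: "T \<omega> k = \<omega> k" using ik by (simp add: T_def \<sigma>_def)
      have img: "\<sigma> ` {j. j < k \<and> 0 < g (snd (\<omega> (\<sigma> j)))} = {j. j < k \<and> 0 < g (snd (\<omega> j))}"
      proof
        show "\<sigma> ` {j. j < k \<and> 0 < g (snd (\<omega> (\<sigma> j)))} \<subseteq> {j. j < k \<and> 0 < g (snd (\<omega> j))}"
          using ik by (auto simp: \<sigma>_def)
        show "{j. j < k \<and> 0 < g (snd (\<omega> j))} \<subseteq> \<sigma> ` {j. j < k \<and> 0 < g (snd (\<omega> (\<sigma> j)))}"
        proof
          fix j assume j: "j \<in> {j. j < k \<and> 0 < g (snd (\<omega> j))}"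
          have "\<sigma> (\<sigma> j) = j" by (simp add: \<sigma>_def)
          moreover have "\<sigma> j < k" using j ik by (simp add: \<sigma>_def)
          ultimately show "j \<in> \<sigma> ` {j. j < k \<and> 0 < g (snd (\<omega> (\<sigma> j)))}" using j
            by (metis (mono_tags, lifting) image_eqI mem_Collect_eq)
        qed
      qed
      have "card {j. j < k \<and> 0 < g (snd (T \<omega> j))} = card {j. j < k \<and> 0 < g (snd (\<omega> (\<sigma> j)))}"
        by (simp add: T_def)
      also have "\<dots> = card {j. j < k \<and> 0 < g (snd (\<omega> j))}"
        unfolding img[symmetric] by (rule card_image[symmetric]) (use inj in \<open>auto simp: inj_on_def\<close>)
      finally have "T \<omega> \<in> E k \<longleftrightarrow> \<omega> \<in> E k" using Tw w Tk by (simp add: E_def)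
      thus ?thesis using T0 by (simp add: indicator_def)
    qed
    have "(\<integral>\<^sup>+\<omega>. indicator (E k) \<omega> * ennreal (g (snd (\<omega> 0))) \<partial>M) =
          (\<integral>\<^sup>+\<omega>. indicator (E k) \<omega> * ennreal (g (snd (\<omega> 0))) \<partial>(distr M M T))"
      by (simp add: distrT)
    also have "\<dots> = (\<integral>\<^sup>+\<omega>. indicator (E k) (T \<omega>) * ennreal (g (snd (T \<omega> 0))) \<partial>M)"
      by (rule nn_integral_distr[OF T_meas]) (simp add: distrT HM)
    also have "\<dots> = (\<integral>\<^sup>+\<omega>. indicator (E k) \<omega> * ennreal (g (snd (\<omega> i))) \<partial>M)"
      by (rule nn_integral_cong) (simp add: key)
    finally show ?thesis by simp
  qed
  define X where "X k = (\<integral>\<^sup>+\<omega>. indicator (E k) \<omega> * ennreal (g (snd (\<omega> 0))) \<partial>M)" for k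
  have "(\<integral>\<^sup>+\<omega>. ennreal (r \<omega>) \<partial>M) =
        (\<integral>\<^sup>+\<omega>. (\<Sum>k. ennreal (1 / real k) * (\<Sum>i<k. indicator (E k) \<omega> * ennreal (g (snd (\<omega> i))))) \<partial>M)"
    by (rule nn_integral_cong_AE[OF AE1])
  also have "\<dots> = (\<Sum>k. \<integral>\<^sup>+\<omega>. ennreal (1 / real k) * (\<Sum>i<k. indicator (E k) \<omega> * ennreal (g (snd (\<omega> i)))) \<partial>M)"
    by (rule nn_integral_suminf) (use HM in measurable)
  also have "\<dots> = (\<Sum>k. X k)"
  proof (rule arg_cong[where f=suminf], rule ext)
    fix k
    have "(\<integral>\<^sup>+\<omega>. ennreal (1 / real k) * (\<Sum>i<k. indicator (E k) \<omega> * ennreal (g (snd (\<omega> i)))) \<partial>M)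
          = ennreal (1 / real k) * (\<Sum>i<k. \<integral>\<^sup>+\<omega>. indicator (E k) \<omega> * ennreal (g (snd (\<omega> i))) \<partial>M)"
    proof -
      have m: "(\<lambda>\<omega>. \<Sum>i<k. indicator (E k) \<omega> * ennreal (g (snd (\<omega> i)))) \<in> borel_measurable M"
        using HM by (intro borel_measurable_sum) auto
      show ?thesis
        by (simp only: nn_integral_cmult[OF m] nn_integral_sum[OF HM])
    qed
    also have "\<dots> = ennreal (1 / real k) * (\<Sum>i<k. X k)"
      unfolding X_def by (intro arg_cong[where f="\<lambda>x. ennreal (1 / real k) * x"] sum.cong refl swap) simp
    also have "\<dots> = X k"
    proof (cases "k = 0")
      case True
      thus ?thesis by (simp add: X_def E0)
    next
      case False
      have "ennreal (1 / real k) * of_nat k = ennreal (1 / real k) * ennreal (real k)"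
        by (simp only: ennreal_of_nat_eq_real_of_nat)
      also have "\<dots> = ennreal (1 / real k * real k)" by (rule ennreal_mult'[symmetric]) simp
      also have "\<dots> = 1" using False by simp
      finally have one: "ennreal (1 / real k) * of_nat k = 1" .
      have "ennreal (1 / real k) * (\<Sum>i<k. X k) = (ennreal (1 / real k) * of_nat k) * X k"
        by (simp only: sum_constant card_lessThan mult.assoc)
      thus ?thesis by (simp only: one mult_1)
    qed
    finally show "(\<integral>\<^sup>+\<omega>. ennreal (1 / real k) * (\<Sum>i<k. indicator (E k) \<omega> * ennreal (g (snd (\<omega> i)))) \<partial>M) = X k" .
  qed
  also have "\<dots> = (\<integral>\<^sup>+\<omega>. (\<Sum>k. indicator (E k) \<omega> * ennreal (g (snd (\<omega> 0)))) \<partial>M)"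
    unfolding X_def by (rule nn_integral_suminf[symmetric]) (use HM in measurable)
  also have "\<dots> = (\<integral>\<^sup>+\<omega>. ennreal (g (snd (\<omega> 0))) \<partial>M)"
  proof (rule nn_integral_cong_AE)
    show "AE \<omega> in M. (\<Sum>k. indicator (E k) \<omega> * ennreal (g (snd (\<omega> 0)))) = ennreal (g (snd (\<omega> 0)))"
      using AE_inf
    proof (rule AE_mp[OF _ AE_I2[rule_format]])
      fix \<omega> assume w: "\<omega> \<in> space M"
      show "infinite {j. 0 < g (snd (\<omega> j))} \<longrightarrow> (\<Sum>k. indicator (E k) \<omega> * ennreal (g (snd (\<omega> 0)))) = ennreal (g (snd (\<omega> 0)))"
      proof
        assume inf: "infinite {j. 0 < g (snd (\<omega> j))}"
        define K where "K = apf_pos g \<omega> N"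
        have "(\<Sum>k. indicator (E k) \<omega> * ennreal (g (snd (\<omega> 0)))) = (\<Sum>k\<in>{K}. indicator (E k) \<omega> * ennreal (g (snd (\<omega> 0))))"
        proof (rule suminf_finite)
          fix k assume "k \<notin> {K}"
          hence "\<omega> \<notin> E k" using pos_E[OF w inf, of k] by (simp add: K_def)
          thus "indicator (E k) \<omega> * ennreal (g (snd (\<omega> 0))) = 0" by simp
        qed simp
        also have "\<dots> = ennreal (g (snd (\<omega> 0)))" using pos_E[OF w inf, of K] by (simp add: K_def)
        finally show "(\<Sum>k. indicator (E k) \<omega> * ennreal (g (snd (\<omega> 0)))) = ennreal (g (snd (\<omega> 0)))" .
      qed
    qed
  qed
  also have "\<dots> = integral\<^sup>N D (\<lambda>z. ennreal (g (snd z)))"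
  proof -
    have comp: "(\<lambda>\<omega>. \<omega> 0) \<in> measurable M D" unfolding M_eq by (rule measurable_component_singleton) simp
    have dist: "distr M D (\<lambda>\<omega>. \<omega> 0) = D" unfolding M_eq by (rule P.PiM_component) simp
    have "integral\<^sup>N D (\<lambda>z. ennreal (g (snd z))) = integral\<^sup>N (distr M D (\<lambda>\<omega>. \<omega> 0)) (\<lambda>z. ennreal (g (snd z)))"
      by (simp add: dist)
    also have "\<dots> = (\<integral>\<^sup>+\<omega>. ennreal (g (snd (\<omega> 0))) \<partial>M)"
      by (rule nn_integral_distr[OF comp]) (use snd_meas assms(9) dist in measurable)
    finally show ?thesis by simp
  qed
  also have "\<dots> = ennreal RHS" by (rule ED)
  finally have NN: "(\<integral>\<^sup>+\<omega>. ennreal (r \<omega>) \<partial>M) = ennreal RHS" .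
  have "integral\<^sup>L M r = enn2real (\<integral>\<^sup>+\<omega>. ennreal (r \<omega>) \<partial>M)"
    by (rule integral_eq_nn_integral[OF r_meas]) (use r_nn in \<open>auto intro: AE_I2\<close>)
  also have "\<dots> = RHS" using NN RHS_pos by simp
  finally show ?thesis by (simp add: r_def M_def RHS_def W_def)
qed

end
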